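(* There are uncountably many minor-closed classes $\mathcal{C}$ of countable graphs that have a universal element, and uncountably many minor-closed classes of countable graphs that do not have a universal element.
   Context: Graphs may be infinite (countable). A graph $H$ is a minor of a graph $G$ if there are pairwise disjoint connected subgraphs $B_v\subseteq G$, $v\in V(H)$, and for every edge $uv\in E(H)$ an edge of $G$ with one endvertex in $B_u$ and the other in $B_v$. A class $\mathcal{C}$ is minor-closed if every minor of a member of $\mathcal{C}$ is in $\mathcal{C}$. A universal element of $\mathcal{C}$ is a graph $U\in\mathcal{C}$ such that every $G\in\mathcal{C}$ is a minor of $U$. *)

theory Defs
  imports Main "HOL-Library.Countable_Set"
begin

text \<open>A countable graph is represented by a vertex set V \<subseteq> nat and a symmetric,
irreflexive edge relation E supported on V.  Every countable graph is isomorphic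
to such a graph, and minor-closed classes are closed under isomorphism.\<close>

type_synonym cgraph = "nat set \<times> (nat \<Rightarrow> nat \<Rightarrow> bool)"

definition is_graph :: "cgraph \<Rightarrow> bool" where
  "is_graph G \<longleftrightarrow>
     (\<forall>a b. snd G a b \<longrightarrow> a \<in> fst G \<and> b \<in> fst G) \<and>
     (\<forall>a b. snd G a b \<longrightarrow> snd G b a) \<and>
     (\<forall>a. \<not> snd G a a)"

definition connected_in :: "cgraph \<Rightarrow> nat set \<Rightarrow> bool" where
  "connected_in G B \<longleftrightarrow> B \<noteq> {} \<and> B \<subseteq> fst G \<and>
     (\<forall>x\<in>B. \<forall>y\<in>B. (\<lambda>a b. a \<in> B \<and> b \<in> B \<and> snd G a b)\<^sup>*\<^sup>* x y)"

definition is_minor :: "cgraph \<Rightarrow> cgraph \<Rightarrow> bool" where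
  "is_minor H G \<longleftrightarrow> (\<exists>branch :: nat \<Rightarrow> nat set.
     (\<forall>v\<in>fst H. connected_in G (branch v)) \<and>
     (\<forall>u\<in>fst H. \<forall>v\<in>fst H. u \<noteq> v \<longrightarrow> branch u \<inter> branch v = {}) \<and>
     (\<forall>u\<in>fst H. \<forall>v\<in>fst H. snd H u v \<longrightarrow>
        (\<exists>a\<in>branch u. \<exists>b\<in>branch v. snd G a b)))"

definition minor_closed :: "cgraph set \<Rightarrow> bool" where
  "minor_closed C \<longleftrightarrow> C \<subseteq> Collect is_graph \<and>
     (\<forall>G\<in>C. \<forall>H. is_graph H \<and> is_minor H G \<longrightarrow> H \<in> C)"

definition has_universal :: "cgraph set \<Rightarrow> bool" where
  "has_universal C \<longleftrightarrow> (\<exists>U\<in>C. \<forall>G\<in>C. is_minor G U)"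

end

theory Submission
  imports Defs "HOL-Library.Nat_Bijection"
begin


definition ind :: "cgraph \<Rightarrow> nat set \<Rightarrow> cgraph" where
  "ind G S = (S, \<lambda>a b. a \<in> S \<and> b \<in> S \<and> snd G a b)"

definition cmp :: "cgraph \<Rightarrow> nat set \<Rightarrow> nat \<Rightarrow> nat set" where
  "cmp G X x = {y. (\<lambda>u v. u \<notin> X \<and> v \<notin> X \<and> snd G u v)\<^sup>*\<^sup>* x y}"

inductive good :: "cgraph \<Rightarrow> bool" where
  "is_graph G \<Longrightarrow> finite X \<Longrightarrow> (\<And>x. x \<in> fst G \<Longrightarrow> x \<notin> X \<Longrightarrow> good (ind G (cmp G X x))) \<Longrightarrow> good G"

lemma good_graph: "good G \<Longrightarrow> is_graph G"
  by (erule good.cases) auto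

lemma ind_graph: "is_graph G \<Longrightarrow> is_graph (ind G S)"
  unfolding is_graph_def ind_def by auto

lemma minor_sub:
  assumes "inj_on h (fst H)" "h ` fst H \<subseteq> fst G"
    "\<And>u v. u \<in> fst H \<Longrightarrow> v \<in> fst H \<Longrightarrow> snd H u v \<Longrightarrow> snd G (h u) (h v)"
  shows "is_minor H G"
  unfolding is_minor_def
  apply (rule exI[of _ "\<lambda>v. {h v}"])
  using assms by (auto simp: connected_in_def inj_on_def)

lemma minor_refl: "is_graph G \<Longrightarrow> is_minor G G"
  by (rule minor_sub[of id]) auto

lemma connD: "connected_in G B \<Longrightarrow> x \<in> B \<Longrightarrow> y \<in> B \<Longrightarrow> (\<lambda>a b. a \<in> B \<and> b \<in> B \<and> snd G a b)\<^sup>*\<^sup>* x y"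
  by (simp add: connected_in_def)
lemma connNE: "connected_in G B \<Longrightarrow> B \<noteq> {}"
  by (simp add: connected_in_def)
lemma connSub: "connected_in G B \<Longrightarrow> B \<subseteq> fst G"
  by (simp add: connected_in_def)
lemma connI: "B \<noteq> {} \<Longrightarrow> B \<subseteq> fst G \<Longrightarrow> (\<And>x y. x \<in> B \<Longrightarrow> y \<in> B \<Longrightarrow> (\<lambda>a b. a \<in> B \<and> b \<in> B \<and> snd G a b)\<^sup>*\<^sup>* x y) \<Longrightarrow> connected_in G B"
  by (simp add: connected_in_def)

lemma conn_union:
  assumes cB: "connected_in G B" and cg: "\<forall>w\<in>B. connected_in K (\<gamma> w)"
    and ed: "\<forall>w\<in>B. \<forall>w'\<in>B. snd G w w' \<longrightarrow> (\<exists>p\<in>\<gamma> w. \<exists>q\<in>\<gamma> w'. snd K p q)"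
  shows "connected_in K (\<Union>(\<gamma> ` B))"
proof -
  define U where "U = \<Union>(\<gamma> ` B)"
  define S where "S = (\<lambda>a b. a \<in> U \<and> b \<in> U \<and> snd K a b)"
  define P where "P = (\<lambda>a b. a \<in> B \<and> b \<in> B \<and> snd G a b)"
  have base0: "S\<^sup>*\<^sup>* y z" if "w \<in> B" "y \<in> \<gamma> w" "z \<in> \<gamma> w" for w y z
  proof -
    have pth: "(\<lambda>a b. a \<in> \<gamma> w \<and> b \<in> \<gamma> w \<and> snd K a b)\<^sup>*\<^sup>* y z"
      using connD[of K "\<gamma> w" y z] cg that by blast
    have le: "(\<lambda>a b. a \<in> \<gamma> w \<and> b \<in> \<gamma> w \<and> snd K a b) \<le> S"
      using that(1) unfolding S_def U_def by blast
    show ?thesis by (rule predicate2D[OF rtranclp_mono[OF le] pth])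
  qed
  have main: "\<forall>y\<in>\<gamma> w1. \<forall>z\<in>\<gamma> w. S\<^sup>*\<^sup>* y z" if "P\<^sup>*\<^sup>* w1 w" "w1 \<in> B" for w1 w
    using that(1)
  proof (induction rule: rtranclp_induct)
    case base
    then show ?case using base0 that(2) by blast
  next
    case (step w w')
    then have ww: "w \<in> B" "w' \<in> B" "snd G w w'" unfolding P_def by auto
    then obtain p q where pq: "p \<in> \<gamma> w" "q \<in> \<gamma> w'" "snd K p q" using ed by blast
    show ?case
    proof (intro ballI)
      fix y z assume yz: "y \<in> \<gamma> w1" "z \<in> \<gamma> w'"
      have 1: "S\<^sup>*\<^sup>* y p" using step.IH yz pq by blast
      have 2: "S p q" using pq ww unfolding S_def U_def by blast
      have 3: "S\<^sup>*\<^sup>* q z" using base0[of w' q z] pq yz ww by blast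
      show "S\<^sup>*\<^sup>* y z" using rtranclp.rtrancl_into_rtrancl[OF 1 2] 3 by (rule rtranclp_trans)
    qed
  qed
  have ne: "U \<noteq> {}"
  proof -
    obtain w where "w \<in> B" using connNE[OF cB] by blast
    moreover then have "\<gamma> w \<noteq> {}" using cg connNE by blast
    ultimately show ?thesis unfolding U_def by blast
  qed
  have sub: "U \<subseteq> fst K" using cg connSub unfolding U_def by blast
  have "\<forall>y\<in>U. \<forall>z\<in>U. S\<^sup>*\<^sup>* y z"
  proof (intro ballI)
    fix y z assume "y \<in> U" "z \<in> U"
    then obtain w1 w2 where w: "w1 \<in> B" "w2 \<in> B" "y \<in> \<gamma> w1" "z \<in> \<gamma> w2" unfolding U_def by blast
    have "P\<^sup>*\<^sup>* w1 w2" using connD[OF cB w(1,2)] unfolding P_def .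
    then show "S\<^sup>*\<^sup>* y z" using main w by blast
  qed
  then show ?thesis using ne sub connI[of U K] unfolding S_def U_def by blast
qed

lemma minor_trans:
  assumes "is_minor H G" "is_minor G K" shows "is_minor H K"
proof -
  obtain \<beta> where b1: "\<forall>v\<in>fst H. connected_in G (\<beta> v)"
    and b2: "\<forall>u\<in>fst H. \<forall>v\<in>fst H. u \<noteq> v \<longrightarrow> \<beta> u \<inter> \<beta> v = {}"
    and b3: "\<forall>u\<in>fst H. \<forall>v\<in>fst H. snd H u v \<longrightarrow> (\<exists>a\<in>\<beta> u. \<exists>b\<in>\<beta> v. snd G a b)"
    using assms(1) unfolding is_minor_def by blast
  obtain \<gamma> where g1: "\<forall>v\<in>fst G. connected_in K (\<gamma> v)"
    and g2: "\<forall>u\<in>fst G. \<forall>v\<in>fst G. u \<noteq> v \<longrightarrow> \<gamma> u \<inter> \<gamma> v = {}"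
    and g3: "\<forall>u\<in>fst G. \<forall>v\<in>fst G. snd G u v \<longrightarrow> (\<exists>a\<in>\<gamma> u. \<exists>b\<in>\<gamma> v. snd K a b)"
    using assms(2) unfolding is_minor_def by blast
  have sub: "v \<in> fst H \<Longrightarrow> \<beta> v \<subseteq> fst G" for v using b1 unfolding connected_in_def by blast
  show ?thesis
    unfolding is_minor_def
  proof (rule exI[of _ "\<lambda>v. \<Union>(\<gamma> ` \<beta> v)"], intro conjI ballI impI)
    fix v assume v: "v \<in> fst H"
    have c1: "connected_in G (\<beta> v)" using b1 v by blast
    have c2: "\<forall>w\<in>\<beta> v. connected_in K (\<gamma> w)" using g1 sub[OF v] by blast
    have c3: "\<forall>w\<in>\<beta> v. \<forall>w'\<in>\<beta> v. snd G w w' \<longrightarrow> (\<exists>p\<in>\<gamma> w. \<exists>q\<in>\<gamma> w'. snd K p q)"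
      using g3 sub[OF v] by blast
    show "connected_in K (\<Union>(\<gamma> ` \<beta> v))" by (rule conn_union[OF c1 c2 c3])
  next
    fix u v assume "u \<in> fst H" "v \<in> fst H" "u \<noteq> v"
    then have d: "\<beta> u \<inter> \<beta> v = {}" "\<beta> u \<subseteq> fst G" "\<beta> v \<subseteq> fst G" using b2 sub by auto
    show "\<Union>(\<gamma> ` \<beta> u) \<inter> \<Union>(\<gamma> ` \<beta> v) = {}"
    proof (rule ccontr)
      assume "\<Union>(\<gamma> ` \<beta> u) \<inter> \<Union>(\<gamma> ` \<beta> v) \<noteq> {}"
      then obtain y a b where "a \<in> \<beta> u" "b \<in> \<beta> v" "y \<in> \<gamma> a" "y \<in> \<gamma> b" by blast
      moreover have "a \<noteq> b" using d calculation by blast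
      ultimately show False using g2 d by blast
    qed
  next
    fix u v assume uv: "u \<in> fst H" "v \<in> fst H" "snd H u v"
    then obtain a b where "a \<in> \<beta> u" "b \<in> \<beta> v" "snd G a b" using b3 by blast
    moreover have "a \<in> fst G" "b \<in> fst G" using sub uv calculation by blast+
    ultimately obtain p q where "p \<in> \<gamma> a" "q \<in> \<gamma> b" "snd K p q" using g3 by blast
    then show "\<exists>a\<in>\<Union>(\<gamma> ` \<beta> u). \<exists>b\<in>\<Union>(\<gamma> ` \<beta> v). snd K a b"
      using \<open>a \<in> \<beta> u\<close> \<open>b \<in> \<beta> v\<close> by blast
  qed
qed



lemma cmp_self: "x \<in> cmp G X x"
  by (simp add: cmp_def)

lemma cmp_step: "y \<in> cmp G X x \<Longrightarrow> y \<notin> X \<Longrightarrow> z \<notin> X \<Longrightarrow> snd G y z \<Longrightarrow> z \<in> cmp G X x"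
  unfolding cmp_def by (simp add: rtranclp.rtrancl_into_rtrancl)

lemma cmp_block:
  assumes step: "\<And>u v. P u \<Longrightarrow> u \<notin> X \<Longrightarrow> v \<notin> X \<Longrightarrow> snd G u v \<Longrightarrow> P v"
    and Px: "P x" and y: "y \<in> cmp G X x"
  shows "P y"
proof -
  have "(\<lambda>u v. u \<notin> X \<and> v \<notin> X \<and> snd G u v)\<^sup>*\<^sup>* x y" using y by (simp add: cmp_def)
  then show ?thesis
  proof (induction rule: rtranclp_induct)
    case base then show ?case using Px .
  next
    case (step u v) then show ?case using assms(1) by blast
  qed
qed

lemma cmp_notin: "y \<in> cmp G X x \<Longrightarrow> x \<notin> X \<Longrightarrow> y \<notin> X"
  by (rule cmp_block[where P="\<lambda>y. y \<notin> X"]) auto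

lemma cmp_V: "is_graph G \<Longrightarrow> x \<in> fst G \<Longrightarrow> y \<in> cmp G X x \<Longrightarrow> y \<in> fst G"
  by (rule cmp_block[where P="\<lambda>y. y \<in> fst G"]) (auto simp: is_graph_def)

lemma cmp_conn:
  assumes c: "connected_in G B" and BX: "B \<inter> X = {}" and b: "b \<in> B" "b \<in> cmp G X x"
  shows "B \<subseteq> cmp G X x"
proof
  fix y assume y: "y \<in> B"
  have "(\<lambda>a c. a \<in> B \<and> c \<in> B \<and> snd G a c)\<^sup>*\<^sup>* b y" using connD[OF c b(1) y] .
  then show "y \<in> cmp G X x"
  proof (induction rule: rtranclp_induct)
    case base then show ?case using b(2) .
  next
    case (step u v)
    then have "u \<notin> X" "v \<notin> X" using BX by auto
    then show ?case using cmp_step step by blast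
  qed
qed

lemma conn_ind: "connected_in G B \<Longrightarrow> B \<subseteq> S \<Longrightarrow> connected_in (ind G S) B"
proof -
  assume c: "connected_in G B" and BS: "B \<subseteq> S"
  have eq: "(\<lambda>a b. a \<in> B \<and> b \<in> B \<and> snd (ind G S) a b) = (\<lambda>a b. a \<in> B \<and> b \<in> B \<and> snd G a b)"
    using BS unfolding ind_def by auto
  show ?thesis
    apply (rule connI)
    using connNE[OF c] apply simp
    using BS apply (simp add: ind_def)
    unfolding eq using connD[OF c] by simp
qed

lemma good_minor_aux: "good G \<Longrightarrow> \<forall>H. is_graph H \<longrightarrow> is_minor H G \<longrightarrow> good H"
proof (induction rule: good.induct)
  case (1 G X)
  show ?case
  proof (intro allI impI)
    fix H assume gH: "is_graph H" and mH: "is_minor H G"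
    from mH obtain \<beta> where b1: "\<forall>v\<in>fst H. connected_in G (\<beta> v)"
      and b2: "\<forall>u\<in>fst H. \<forall>v\<in>fst H. u \<noteq> v \<longrightarrow> \<beta> u \<inter> \<beta> v = {}"
      and b3: "\<forall>u\<in>fst H. \<forall>v\<in>fst H. snd H u v \<longrightarrow> (\<exists>a\<in>\<beta> u. \<exists>b\<in>\<beta> v. snd G a b)"
      unfolding is_minor_def by blast
    define Y where "Y = {v \<in> fst H. \<beta> v \<inter> X \<noteq> {}}"
    define s where "s v = (SOME x. x \<in> \<beta> v \<inter> X)" for v
    have s: "s v \<in> \<beta> v \<inter> X" if "v \<in> Y" for v
    proof -
      have "\<exists>x. x \<in> \<beta> v \<inter> X" using that unfolding Y_def by blast
      then show ?thesis unfolding s_def by (rule someI_ex)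
    qed
    have "inj_on s Y"
    proof (rule inj_onI)
      fix u v assume uv: "u \<in> Y" "v \<in> Y" "s u = s v"
      have H: "u \<in> fst H" "v \<in> fst H" using uv(1,2) unfolding Y_def by auto
      show "u = v"
      proof (rule ccontr)
        assume "u \<noteq> v"
        then have "\<beta> u \<inter> \<beta> v = {}" using b2 H by blast
        moreover have "s u \<in> \<beta> u" "s u \<in> \<beta> v" using s[OF uv(1)] s[OF uv(2)] uv(3) by auto
        ultimately show False by blast
      qed
    qed
    moreover have "s ` Y \<subseteq> X" using s by blast
    ultimately have finY: "finite Y" using 1(2) by (meson finite_imageD finite_subset)
    show "good H"
    proof (rule good.intros[OF gH finY])
      fix x assume x: "x \<in> fst H" "x \<notin> Y"
      define C where "C = cmp H Y x"
      obtain a where a: "a \<in> \<beta> x" using connNE b1 x(1) by blast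
      have aG: "a \<in> fst G" using connSub b1 x(1) a by blast
      have bxX: "\<beta> x \<inter> X = {}" using x unfolding Y_def by blast
      have aX: "a \<notin> X" using a bxX by blast
      define D where "D = cmp G X a"
      have CD: "w \<in> fst H \<and> \<beta> w \<subseteq> D" if w: "w \<in> C" for w
      proof (rule cmp_block[where P="\<lambda>w. w \<in> fst H \<and> \<beta> w \<subseteq> D" and X=Y and G=H and x=x])
        show "x \<in> fst H \<and> \<beta> x \<subseteq> D"
          using x(1) cmp_conn[of G "\<beta> x" X a a] b1 bxX a cmp_self unfolding D_def by blast
        show "w \<in> cmp H Y x" using w C_def by simp
      next
        fix u v assume u: "u \<in> fst H \<and> \<beta> u \<subseteq> D" and uY: "u \<notin> Y" and vY: "v \<notin> Y" and e: "snd H u v"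
        have vH: "v \<in> fst H" using gH e unfolding is_graph_def by blast
        obtain p q where pq: "p \<in> \<beta> u" "q \<in> \<beta> v" "snd G p q" using b3 u vH e by blast
        have "p \<notin> X" using pq uY u unfolding Y_def by blast
        moreover have "q \<notin> X" using pq vY vH unfolding Y_def by blast
        moreover have "p \<in> D" using u pq by blast
        ultimately have "q \<in> D" using cmp_step pq unfolding D_def by blast
        moreover have "\<beta> v \<inter> X = {}" using vY vH unfolding Y_def by blast
        ultimately have "\<beta> v \<subseteq> D" using cmp_conn[of G "\<beta> v" X q a] b1 vH pq unfolding D_def by blast
        then show "v \<in> fst H \<and> \<beta> v \<subseteq> D" using vH by blast
      qed
      have "is_minor (ind H C) (ind G D)"
        unfolding is_minor_def
      proof (rule exI[of _ \<beta>], intro conjI ballI impI)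
        fix v assume "v \<in> fst (ind H C)"
        then have "v \<in> C" by (simp add: ind_def)
        then show "connected_in (ind G D) (\<beta> v)" using CD conn_ind b1 by blast
      next
        fix u v assume "u \<in> fst (ind H C)" "v \<in> fst (ind H C)" "u \<noteq> v"
        then show "\<beta> u \<inter> \<beta> v = {}" using CD b2 by (simp add: ind_def)
      next
        fix u v assume uv: "u \<in> fst (ind H C)" "v \<in> fst (ind H C)" "snd (ind H C) u v"
        then have "u \<in> C" "v \<in> C" "snd H u v" by (auto simp: ind_def)
        moreover then obtain p q where "p \<in> \<beta> u" "q \<in> \<beta> v" "snd G p q" using b3 CD by blast
        ultimately show "\<exists>a\<in>\<beta> u. \<exists>b\<in>\<beta> v. snd (ind G D) a b" using CD by (auto simp: ind_def)
      qed
      moreover have "is_graph (ind H C)" using ind_graph[OF gH] .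
      ultimately show "good (ind H (cmp H Y x))" using 1(4)[OF aG aX] unfolding C_def D_def by blast
    qed
  qed
qed

lemma good_minor: "good G \<Longrightarrow> is_graph H \<Longrightarrow> is_minor H G \<Longrightarrow> good H"
  using good_minor_aux by blast



definition DU :: "(nat \<Rightarrow> cgraph) \<Rightarrow> cgraph" where
  "DU f = ({n. snd (prod_decode n) \<in> fst (f (fst (prod_decode n)))},
     \<lambda>a b. fst (prod_decode a) = fst (prod_decode b) \<and>
       snd (f (fst (prod_decode a))) (snd (prod_decode a)) (snd (prod_decode b)))"

lemma is_graphI:
  "(\<And>a b. snd G a b \<Longrightarrow> a \<in> fst G) \<Longrightarrow> (\<And>a b. snd G a b \<Longrightarrow> b \<in> fst G) \<Longrightarrow>
   (\<And>a b. snd G a b \<Longrightarrow> snd G b a) \<Longrightarrow> (\<And>a. \<not> snd G a a) \<Longrightarrow> is_graph G"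
  unfolding is_graph_def by blast

lemma DU_graph:
  assumes "\<forall>i. is_graph (f i)" shows "is_graph (DU f)"
proof (rule is_graphI)
  fix a b assume e: "snd (DU f) a b"
  then have e': "fst (prod_decode a) = fst (prod_decode b)"
    "snd (f (fst (prod_decode a))) (snd (prod_decode a)) (snd (prod_decode b))"
    by (auto simp: DU_def)
  have g: "is_graph (f (fst (prod_decode a)))" using assms by blast
  show "a \<in> fst (DU f)" using e' g unfolding is_graph_def DU_def by auto
  show "b \<in> fst (DU f)" using e' g unfolding is_graph_def DU_def by auto
  show "snd (DU f) b a" using e' g unfolding is_graph_def DU_def by auto
next
  fix a show "\<not> snd (DU f) a a" using assms unfolding is_graph_def DU_def by auto
qed

lemma DU_minor: "is_graph (f i) \<Longrightarrow> is_minor (f i) (DU f)"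
  by (rule minor_sub[where h="\<lambda>v. prod_encode (i, v)"]) (auto simp: inj_on_def DU_def)

lemma empty_graph: "is_graph ({}, \<lambda>_ _. False)"
  by (simp add: is_graph_def)

lemma empty_good: "good ({}, \<lambda>_ _. False)"
  by (rule good.intros[OF empty_graph, of "{}"]) auto

lemma DU_good:
  assumes gd: "\<forall>i. good (f i)" shows "good (DU f)"
proof -
  have gr: "\<forall>i. is_graph (f i)" using gd good_graph by blast
  have G: "is_graph (DU f)" using DU_graph[OF gr] .
  show ?thesis
  proof (rule good.intros[OF G, of "{}"])
    show "finite {}" by simp
    fix x assume x: "x \<in> fst (DU f)" "x \<notin> {}"
    define i where "i = fst (prod_decode x)"
    define C where "C = cmp (DU f) {} x"
    have blk: "fst (prod_decode y) = i \<and> y \<in> fst (DU f)" if "y \<in> C" for y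
    proof (rule cmp_block[where P="\<lambda>y. fst (prod_decode y) = i \<and> y \<in> fst (DU f)" and G="DU f" and X="{}" and x=x])
      show "fst (prod_decode x) = i \<and> x \<in> fst (DU f)" using x i_def by simp
      show "y \<in> cmp (DU f) {} x" using that C_def by simp
    next
      fix u v assume "fst (prod_decode u) = i \<and> u \<in> fst (DU f)" "snd (DU f) u v"
      moreover then have "v \<in> fst (DU f)" using G unfolding is_graph_def by blast
      ultimately show "fst (prod_decode v) = i \<and> v \<in> fst (DU f)" by (simp add: DU_def)
    qed
    have "is_minor (ind (DU f) C) (f i)"
    proof (rule minor_sub[where h="\<lambda>y. snd (prod_decode y)"])
      show "inj_on (\<lambda>y. snd (prod_decode y)) (fst (ind (DU f) C))"
      proof (rule inj_onI)
        fix y1 y2 assume "y1 \<in> fst (ind (DU f) C)" "y2 \<in> fst (ind (DU f) C)"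
          "snd (prod_decode y1) = snd (prod_decode y2)"
        then have "prod_decode y1 = prod_decode y2" using blk by (simp add: ind_def prod_eq_iff)
        then show "y1 = y2" by simp
      qed
      show "(\<lambda>y. snd (prod_decode y)) ` fst (ind (DU f) C) \<subseteq> fst (f i)"
        using blk by (auto simp: ind_def DU_def)
      fix u v assume "u \<in> fst (ind (DU f) C)" "v \<in> fst (ind (DU f) C)" "snd (ind (DU f) C) u v"
      then show "snd (f i) (snd (prod_decode u)) (snd (prod_decode v))"
        using blk by (auto simp: ind_def DU_def)
    qed
    then show "good (ind (DU f) (cmp (DU f) {} x))"
      using good_minor[OF _ ind_graph[OF G]] gd unfolding C_def by blast
  qed
qed

definition HV :: "nat \<Rightarrow> cgraph \<Rightarrow> nat set" where
  "HV k H = {n. (fst (prod_decode n) = 0 \<and> snd (prod_decode n) \<le> k) \<or>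
                (fst (prod_decode n) \<noteq> 0 \<and> snd (prod_decode n) \<in> fst H)}"

definition HG :: "nat \<Rightarrow> cgraph \<Rightarrow> cgraph" where
  "HG k H = (HV k H, \<lambda>a b.
     (a \<in> HV k H \<and> b \<in> HV k H \<and> ((fst (prod_decode a) = 0) \<noteq> (fst (prod_decode b) = 0))) \<or>
     (fst (prod_decode a) = fst (prod_decode b) \<and> fst (prod_decode a) \<noteq> 0 \<and>
        snd H (snd (prod_decode a)) (snd (prod_decode b))))"

lemma HG_graph:
  assumes g: "is_graph H" shows "is_graph (HG k H)"
proof (rule is_graphI)
  fix a b assume e: "snd (HG k H) a b"
  show "a \<in> fst (HG k H)"
    using e g unfolding is_graph_def HG_def HV_def by auto
  show "b \<in> fst (HG k H)"
    using e g unfolding is_graph_def HG_def HV_def by auto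
  show "snd (HG k H) b a"
    using e g unfolding is_graph_def HG_def by auto
next
  fix a show "\<not> snd (HG k H) a a" using g unfolding is_graph_def HG_def by auto
qed

lemma HG_good:
  assumes gd: "good H" shows "good (HG k H)"
proof -
  have gH: "is_graph H" using good_graph[OF gd] .
  have G: "is_graph (HG k H)" using HG_graph[OF gH] .
  define Xh where "Xh = {n. fst (prod_decode n) = 0 \<and> snd (prod_decode n) \<le> k}"
  have "Xh \<subseteq> prod_encode ` ({0} \<times> {..k})"
  proof
    fix n assume "n \<in> Xh"
    then have "prod_decode n \<in> {0} \<times> {..k}" unfolding Xh_def by (auto simp: mem_Times_iff)
    then show "n \<in> prod_encode ` ({0} \<times> {..k})" by (metis image_eqI prod_decode_inverse)
  qed
  then have finX: "finite Xh" by (rule finite_subset) simp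
  show ?thesis
  proof (rule good.intros[OF G finX])
    fix x assume x: "x \<in> fst (HG k H)" "x \<notin> Xh"
    define j where "j = fst (prod_decode x)"
    have j0: "j \<noteq> 0" using x unfolding j_def Xh_def HG_def HV_def by auto
    define C where "C = cmp (HG k H) Xh x"
    have blk: "fst (prod_decode y) = j \<and> y \<in> HV k H" if "y \<in> C" for y
    proof (rule cmp_block[where P="\<lambda>y. fst (prod_decode y) = j \<and> y \<in> HV k H" and G="HG k H" and X="Xh" and x=x])
      show "fst (prod_decode x) = j \<and> x \<in> HV k H" using x j_def by (simp add: HG_def)
      show "y \<in> cmp (HG k H) Xh x" using that C_def by simp
    next
      fix u v assume u: "fst (prod_decode u) = j \<and> u \<in> HV k H" and uX: "u \<notin> Xh" and vX: "v \<notin> Xh"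
        and e: "snd (HG k H) u v"
      have vV: "v \<in> HV k H" using G e unfolding is_graph_def by (auto simp: HG_def)
      have "fst (prod_decode v) \<noteq> 0" using vV vX unfolding HV_def Xh_def by auto
      then show "fst (prod_decode v) = j \<and> v \<in> HV k H" using e u vV j0 by (auto simp: HG_def)
    qed
    have "is_minor (ind (HG k H) C) H"
    proof (rule minor_sub[where h="\<lambda>y. snd (prod_decode y)"])
      show "inj_on (\<lambda>y. snd (prod_decode y)) (fst (ind (HG k H) C))"
      proof (rule inj_onI)
        fix y1 y2 assume "y1 \<in> fst (ind (HG k H) C)" "y2 \<in> fst (ind (HG k H) C)"
          "snd (prod_decode y1) = snd (prod_decode y2)"
        then have "prod_decode y1 = prod_decode y2" using blk by (simp add: ind_def prod_eq_iff)
        then show "y1 = y2" by simp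
      qed
      have "snd (prod_decode y) \<in> fst H" if "y \<in> C" for y
        using blk[OF that] j0 unfolding HV_def by auto
      then show "(\<lambda>y. snd (prod_decode y)) ` fst (ind (HG k H) C) \<subseteq> fst H"
        by (auto simp: ind_def)
      fix u v assume "u \<in> fst (ind (HG k H) C)" "v \<in> fst (ind (HG k H) C)" "snd (ind (HG k H) C) u v"
      then show "snd H (snd (prod_decode u)) (snd (prod_decode v))"
        using blk j0 by (auto simp: ind_def HG_def)
    qed
    then show "good (ind (HG k H) (cmp (HG k H) Xh x))"
      using good_minor[OF gd ind_graph[OF G]] unfolding C_def by blast
  qed
qed



lemma no_top: "good W \<Longrightarrow> \<exists>G. good G \<and> \<not> is_minor G W"
proof (induction rule: good.induct)
  case (1 W X)
  define g where "g x = (SOME G. good G \<and> \<not> is_minor G (ind W (cmp W X x)))" for x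
  have gx: "good (g x) \<and> \<not> is_minor (g x) (ind W (cmp W X x))" if "x \<in> fst W" "x \<notin> X" for x
    unfolding g_def by (rule someI_ex) (rule 1(4)[OF that])
  define f where "f i = (if i \<in> fst W \<and> i \<notin> X then g i else ({}, \<lambda>_ _. False))" for i
  have gf: "\<forall>i. good (f i)" using gx empty_good unfolding f_def by auto
  define H where "H = DU f"
  have gH: "good H" unfolding H_def using DU_good[OF gf] .
  have grH: "is_graph H" using good_graph[OF gH] .
  define k where "k = card X"
  define G where "G = HG k H"
  have gG: "good G" unfolding G_def using HG_good[OF gH] .
  have "\<not> is_minor G W"
  proof
    assume "is_minor G W"
    then obtain \<beta> where b1: "\<forall>v\<in>fst G. connected_in W (\<beta> v)"
      and b2: "\<forall>u\<in>fst G. \<forall>v\<in>fst G. u \<noteq> v \<longrightarrow> \<beta> u \<inter> \<beta> v = {}"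
      and b3: "\<forall>u\<in>fst G. \<forall>v\<in>fst G. snd G u v \<longrightarrow> (\<exists>a\<in>\<beta> u. \<exists>b\<in>\<beta> v. snd W a b)"
      unfolding is_minor_def by blast
    define Y where "Y = {v \<in> fst G. \<beta> v \<inter> X \<noteq> {}}"
    define s where "s v = (SOME x. x \<in> \<beta> v \<inter> X)" for v
    have s: "s v \<in> \<beta> v \<inter> X" if "v \<in> Y" for v
    proof -
      have "\<exists>x. x \<in> \<beta> v \<inter> X" using that unfolding Y_def by blast
      then show ?thesis unfolding s_def by (rule someI_ex)
    qed
    have inj: "inj_on s Y"
    proof (rule inj_onI)
      fix u v assume uv: "u \<in> Y" "v \<in> Y" "s u = s v"
      have V: "u \<in> fst G" "v \<in> fst G" using uv(1,2) unfolding Y_def by auto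
      show "u = v"
      proof (rule ccontr)
        assume "u \<noteq> v"
        then have "\<beta> u \<inter> \<beta> v = {}" using b2 V by blast
        moreover have "s u \<in> \<beta> u" "s u \<in> \<beta> v" using s[OF uv(1)] s[OF uv(2)] uv(3) by auto
        ultimately show False by blast
      qed
    qed
    have sY: "s ` Y \<subseteq> X" using s by blast
    have finY: "finite Y" using inj sY 1(2) by (meson finite_imageD finite_subset)
    have cardY: "card Y \<le> k" unfolding k_def using card_inj_on_le[OF inj sY 1(2)] .
    \<comment> \<open>a hub outside Y\<close>
    obtain i where i: "i \<le> k" "prod_encode (0, i) \<notin> Y"
    proof (rule ccontr)
      assume "\<not> thesis"
      then have "(\<lambda>i. prod_encode (0, i)) ` {..k} \<subseteq> Y" using that by blast
      then have "card ((\<lambda>i. prod_encode (0, i)) ` {..k}) \<le> card Y" using finY by (rule card_mono[rotated])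
      moreover have "card ((\<lambda>i. prod_encode (0, i)) ` {..k}) = Suc k"
        by (subst card_image) (auto simp: inj_on_def)
      ultimately show False using cardY by simp
    qed
    \<comment> \<open>a copy avoiding Y\<close>
    define M where "M = Max ((\<lambda>y. fst (prod_decode y)) ` Y \<union> {0})"
    have M: "fst (prod_decode y) \<noteq> Suc M" if "y \<in> Y" for y
    proof -
      have "fst (prod_decode y) \<le> M" unfolding M_def using finY that by (intro Max_ge) auto
      then show ?thesis by simp
    qed
    define h where "h = prod_encode (0, i)"
    have hG: "h \<in> fst G" unfolding h_def G_def HG_def HV_def using i by simp
    have hX: "\<beta> h \<inter> X = {}" using hG i unfolding Y_def h_def by blast
    obtain a where a: "a \<in> \<beta> h" using connNE b1 hG by blast
    have aW: "a \<in> fst W" using connSub b1 hG a by blast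
    have aX: "a \<notin> X" using a hX by blast
    define D where "D = cmp W X a"
    have hD: "\<beta> h \<subseteq> D" unfolding D_def using cmp_conn[of W "\<beta> h" X a a] b1 hG hX a cmp_self by blast
    define w where "w v = prod_encode (Suc M, v)" for v
    have wG: "w v \<in> fst G" if "v \<in> fst H" for v using that unfolding w_def G_def HG_def HV_def by simp
    have wY: "w v \<notin> Y" for v using M[of "w v"] unfolding w_def by auto
    have wD: "\<beta> (w v) \<subseteq> D" if v: "v \<in> fst H" for v
    proof -
      have "snd G h (w v)" using hG wG[OF v] unfolding G_def HG_def h_def w_def by simp
      then obtain p q where pq: "p \<in> \<beta> h" "q \<in> \<beta> (w v)" "snd W p q" using b3 hG wG[OF v] by blast
      have wX: "\<beta> (w v) \<inter> X = {}" using wY wG[OF v] unfolding Y_def by blast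
      have "p \<in> D" "p \<notin> X" using pq hD hX by auto
      moreover have "q \<notin> X" using pq wX by blast
      ultimately have "q \<in> D" using cmp_step pq(3) unfolding D_def by blast
      then show ?thesis unfolding D_def using cmp_conn[of W "\<beta> (w v)" X q a] b1 wG[OF v] wX pq(2)
        unfolding D_def by blast
    qed
    have HD: "is_minor H (ind W D)"
      unfolding is_minor_def
    proof (rule exI[of _ "\<lambda>v. \<beta> (w v)"], intro conjI ballI impI)
      fix v assume v: "v \<in> fst H"
      show "connected_in (ind W D) (\<beta> (w v))" using conn_ind b1 wG[OF v] wD[OF v] by blast
    next
      fix u v assume uv: "u \<in> fst H" "v \<in> fst H" "u \<noteq> v"
      then have "w u \<noteq> w v" unfolding w_def by simp
      then show "\<beta> (w u) \<inter> \<beta> (w v) = {}" using b2 wG uv by blast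
    next
      fix u v assume uv: "u \<in> fst H" "v \<in> fst H" "snd H u v"
      then have "snd G (w u) (w v)" unfolding G_def HG_def w_def by simp
      then obtain p q where "p \<in> \<beta> (w u)" "q \<in> \<beta> (w v)" "snd W p q" using b3 wG uv by blast
      then show "\<exists>p\<in>\<beta> (w u). \<exists>q\<in>\<beta> (w v). snd (ind W D) p q"
        using wD uv unfolding ind_def by auto
    qed
    have fa: "f a = g a" unfolding f_def using aW aX by simp
    have "is_graph (g a)" using gx[OF aW aX] good_graph by blast
    then have "is_minor (g a) H" unfolding H_def using DU_minor[of f a] fa by simp
    then have "is_minor (g a) (ind W D)" using HD minor_trans by blast
    then show False using gx[OF aW aX] unfolding D_def by blast
  qed
  then show ?case using gG by blast
qed

lemma no_dom:
  assumes cF: "countable F" and gF: "F \<subseteq> Collect good"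
    and dom: "\<forall>W. good W \<longrightarrow> (\<exists>V\<in>F. is_minor W V)"
  shows False
proof -
  have "F \<noteq> {}" using dom empty_good by blast
  define f where "f = from_nat_into F"
  have rf: "range f = F" unfolding f_def using range_from_nat_into[OF \<open>F \<noteq> {}\<close> cF] .
  have gf: "\<forall>i. good (f i)" using rf gF by auto
  have gU: "good (DU f)" using DU_good[OF gf] .
  obtain G where G: "good G" "\<not> is_minor G (DU f)" using no_top[OF gU] by blast
  obtain V where V: "V \<in> F" "is_minor G V" using dom G(1) by blast
  obtain j where j: "V = f j" using V(1) rf by blast
  have "is_minor (f j) (DU f)" using DU_minor good_graph gf by blast
  then show False using G(2) V(2) j minor_trans by blast
qed



definition Down :: "cgraph \<Rightarrow> cgraph set" where
  "Down G = {H. is_graph H \<and> is_minor H G}"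

lemma Down_mc: "minor_closed (Down G)"
  unfolding minor_closed_def Down_def using minor_trans by blast

lemma Down_self: "is_graph G \<Longrightarrow> G \<in> Down G"
  unfolding Down_def using minor_refl by blast

lemma Down_univ: "is_graph G \<Longrightarrow> has_universal (Down G)"
proof -
  assume g: "is_graph G"
  have "\<forall>H\<in>Down G. is_minor H G" by (simp add: Down_def)
  then show ?thesis unfolding has_universal_def using Down_self[OF g] by blast
qed

lemma partA: "uncountable {C. minor_closed C \<and> has_universal C}"
proof
  assume cA: "countable {C. minor_closed C \<and> has_universal C}"
  define A where "A = {C. minor_closed C \<and> has_universal C}"
  define u where "u C = (SOME U. U \<in> C \<and> (\<forall>G\<in>C. is_minor G U))" for C
  have u: "u C \<in> C \<and> (\<forall>G\<in>C. is_minor G (u C))" if "C \<in> A" for C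
  proof -
    have "\<exists>U. U \<in> C \<and> (\<forall>G\<in>C. is_minor G U)" using that unfolding A_def has_universal_def by blast
    then show ?thesis unfolding u_def by (rule someI_ex)
  qed
  define F where "F = u ` A \<inter> Collect good"
  have cF: "countable F" unfolding F_def using cA A_def by auto
  have "\<forall>W. good W \<longrightarrow> (\<exists>V\<in>F. is_minor W V)"
  proof (intro allI impI)
    fix W assume gW: "good W"
    have grW: "is_graph W" using good_graph[OF gW] .
    have DA: "Down W \<in> A" unfolding A_def using Down_mc Down_univ[OF grW] by blast
    have "u (Down W) \<in> Down W" using u[OF DA] by blast
    then have "good (u (Down W))" using good_minor[OF gW] unfolding Down_def by blast
    moreover have "is_minor W (u (Down W))" using u[OF DA] Down_self[OF grW] by blast
    ultimately show "\<exists>V\<in>F. is_minor W V" unfolding F_def using DA by blast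
  qed
  then show False using no_dom[OF cF] unfolding F_def by blast
qed

definition nxt :: "cgraph \<Rightarrow> cgraph" where
  "nxt W = (SOME G. good G \<and> \<not> is_minor G W)"

lemma nxt: "good W \<Longrightarrow> good (nxt W) \<and> \<not> is_minor (nxt W) W"
  unfolding nxt_def by (rule someI_ex) (rule no_top)

definition DU2 :: "cgraph \<Rightarrow> cgraph \<Rightarrow> cgraph" where
  "DU2 A B = DU (\<lambda>i. if i = 0 then A else B)"

primrec sq :: "cgraph \<Rightarrow> nat \<Rightarrow> cgraph" where
  "sq W 0 = W"
| "sq W (Suc n) = DU2 (sq W n) (nxt (sq W n))"

lemma sq_good: "good W \<Longrightarrow> good (sq W n)"
proof (induction n)
  case 0 then show ?case by simp
next
  case (Suc n)
  then have "good (sq W n)" "good (nxt (sq W n))" using nxt by auto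
  then have "\<forall>i. good ((\<lambda>i. if i = 0 then sq W n else nxt (sq W n)) i)" by simp
  then show ?case unfolding sq.simps DU2_def by (rule DU_good)
qed

definition NN :: "cgraph \<Rightarrow> cgraph set" where
  "NN W = (\<Union>n. Down (sq W n))"

lemma NN_mc: "minor_closed (NN W)"
  unfolding minor_closed_def NN_def Down_def using minor_trans by blast

lemma NN_self: "good W \<Longrightarrow> W \<in> NN W"
  unfolding NN_def using Down_self[OF good_graph] by (metis UN_I UNIV_I sq.simps(1))

lemma NN_nouniv:
  assumes gW: "good W" shows "\<not> has_universal (NN W)"
proof
  assume "has_universal (NN W)"
  then obtain U where U: "U \<in> NN W" "\<forall>G\<in>NN W. is_minor G U" unfolding has_universal_def by blast
  then obtain n where n: "is_minor U (sq W n)" unfolding NN_def Down_def by blast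
  have g1: "good (sq W (Suc n))" using sq_good[OF gW] .
  have "sq W (Suc n) \<in> NN W" unfolding NN_def using Down_self[OF good_graph[OF g1]] by blast
  then have m1: "is_minor (sq W (Suc n)) (sq W n)" using U(2) n minor_trans by blast
  have gn: "good (sq W n)" using sq_good[OF gW] .
  have nx: "good (nxt (sq W n)) \<and> \<not> is_minor (nxt (sq W n)) (sq W n)" using nxt[OF gn] .
  define ff where "ff = (\<lambda>i::nat. if i = 0 then sq W n else nxt (sq W n))"
  have "is_graph (ff 1)" unfolding ff_def using nx good_graph by simp
  then have "is_minor (ff 1) (DU ff)" by (rule DU_minor)
  then have "is_minor (nxt (sq W n)) (sq W (Suc n))" by (simp add: DU2_def ff_def)
  then show False using m1 nx minor_trans by blast
qed

lemma partB: "uncountable {C. minor_closed C \<and> \<not> has_universal C}"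
proof
  assume cB: "countable {C. minor_closed C \<and> \<not> has_universal C}"
  define NS where "NS = NN ` Collect good"
  have sub: "NS \<subseteq> {C. minor_closed C \<and> \<not> has_universal C}"
    unfolding NS_def using NN_mc NN_nouniv by blast
  have cN: "countable NS" using countable_subset[OF sub cB] .
  define r where "r C = (SOME W. good W \<and> C = NN W)" for C
  have r: "good (r C) \<and> C = NN (r C)" if "C \<in> NS" for C
  proof -
    have "\<exists>W. good W \<and> C = NN W" using that unfolding NS_def by blast
    then show ?thesis unfolding r_def by (rule someI_ex)
  qed
  define F where "F = (\<lambda>p. sq (r (fst p)) (snd p)) ` (NS \<times> (UNIV :: nat set))"
  have cF: "countable F" unfolding F_def using cN by auto
  have gF: "F \<subseteq> Collect good"
  proof
    fix V assume "V \<in> F"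
    then obtain C m where "C \<in> NS" "V = sq (r C) m" unfolding F_def by auto
    then show "V \<in> Collect good" using r sq_good by blast
  qed
  have "\<forall>W. good W \<longrightarrow> (\<exists>V\<in>F. is_minor W V)"
  proof (intro allI impI)
    fix W assume gW: "good W"
    define C where "C = NN W"
    have CN: "C \<in> NS" unfolding C_def NS_def using gW by blast
    have "W \<in> NN (r C)" using r[OF CN] NN_self[OF gW] unfolding C_def by simp
    then obtain n where "is_minor W (sq (r C) n)" unfolding NN_def Down_def by blast
    moreover have "sq (r C) n \<in> F" unfolding F_def using CN by force
    ultimately show "\<exists>V\<in>F. is_minor W V" by blast
  qed
  then show False using no_dom[OF cF gF] by blast
qed

theorem theorem1p7:
  shows "uncountable {C. minor_closed C \<and> has_universal C} \<and>
         uncountable {C. minor_closed C \<and> \<not> has_universal C}"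
  using partA partB by blast

end
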